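(* Assume the setting described in the context. Let $f\in\acute{\mathcal J}$ and $g\in\grave{\mathcal J}$ be weight invariants with weights $\widehat f,\widehat g$, and let $s$ be an integer with $0\le s\le\widehat f$, $0\le s\le\widehat g$. Then there is a nonzero real constant $c$ such that $\acute{\mathcal X}^s(f,g)^{(s)}=c\,fg$, and $\acute{\mathcal X}^k(f,g)^{(s)}=0$ for every integer $k>s$.
   Context: For a real square matrix $A_0$ put $\mathcal D_{A_0}f(\mathbf x)=f'(\mathbf x)A_0\mathbf x$. Let $(\acute X,\acute Y,\acute Z)$ and $(\grave X,\grave Y,\grave Z)$ be $\mathfrak{sl}_2$ triads ($[X,Y]=Z,[Z,X]=2X,[Z,Y]=-2Y$) of real $n\times n$ resp. $m\times m$ matrices, with independent variables $\mathbf x\in\mathbb R^n$, $\mathbf y\in\mathbb R^m$. On $\mathbb R[[\mathbf x]]$: $\acute{\mathcal X}=\mathcal D_{\acute Y},\acute{\mathcal Y}=\mathcal D_{\acute X},\acute{\mathcal Z}=\mathcal D_{\acute Z}$; on $\mathbb R[[\mathbf y]]$: $\grave{\mathcal X}=\mathcal D_{\grave Y},\grave{\mathcal Y}=\mathcal D_{\grave X},\grave{\mathcal Z}=\mathcal D_{\grave Z}$; these are extended to $\mathbb R[[\mathbf x,\mathbf y]]$ acting only on the $\mathbf x$ (resp. $\mathbf y$) variables. $\acute{\mathcal J}=\ker\acute{\mathcal X}$, $\grave{\mathcal J}=\ker\grave{\mathcal X}$. A weight invariant is $f\in\acute{\mathcal J}$ with $\acute{\mathcal Z}f=\widehat ff$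 (similarly in $\grave{\mathcal J}$). External transvectant: $(f,g)^{(s)}=\sum_{j=0}^s(-1)^j\binom sj\frac{(\widehat f-j)!}{(\widehat f-s)!}\frac{(\widehat g-s+j)!}{(\widehat g-s)!}(\acute{\mathcal Y}^jf)(\grave{\mathcal Y}^{s-j}g)$. *)

theory Defs
  imports "HOL-Analysis.Analysis"
begin

text \<open>Formal power series in the variables indexed by a finite type 'n are
represented by their coefficient functions: the coefficient of the monomial
x^alpha (alpha :: 'n \<Rightarrow> nat an exponent vector) is F alpha.\<close>

type_synonym 'n ps = "('n \<Rightarrow> nat) \<Rightarrow> real"
type_synonym ('n, 'm) ps2 = "('n \<Rightarrow> nat) \<Rightarrow> ('m \<Rightarrow> nat) \<Rightarrow> real"

definition sl2_triad :: "real^'n^'n \<Rightarrow> real^'n^'n \<Rightarrow> real^'n^'n \<Rightarrow> bool" where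
  "sl2_triad X Y Z \<longleftrightarrow>
     X ** Y - Y ** X = Z \<and> Z ** X - X ** Z = 2 *\<^sub>R X \<and> Z ** Y - Y ** Z = - (2 *\<^sub>R Y)"

text \<open>D_A f = f'(x) A x = sum_i (d f / d x_i) * (A x)_i = sum_{i,j} A_ij x_j d_i f,
written coefficientwise: x_j * d_i (x^beta) contributes to x^alpha with
beta = alpha - e_j + e_i.\<close>
definition ps_D :: "real^'n^'n \<Rightarrow> 'n::finite ps \<Rightarrow> 'n ps" where
  "ps_D A f = (\<lambda>\<alpha>. \<Sum>i\<in>UNIV. \<Sum>j\<in>UNIV. A $ i $ j *
      (if \<alpha> j = 0 then 0
       else (let \<beta> = \<alpha>(j := \<alpha> j - 1) in real (\<beta> i + 1) * f (\<beta>(i := \<beta> i + 1)))))"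

definition on_x :: "('n ps \<Rightarrow> 'n ps) \<Rightarrow> ('n, 'm) ps2 \<Rightarrow> ('n, 'm) ps2" where
  "on_x T F = (\<lambda>\<alpha> \<beta>. T (\<lambda>\<gamma>. F \<gamma> \<beta>) \<alpha>)"

definition ext_prod :: "'n ps \<Rightarrow> 'm ps \<Rightarrow> ('n, 'm) ps2" where
  "ext_prod f g = (\<lambda>\<alpha> \<beta>. f \<alpha> * g \<beta>)"

text \<open>External transvectant (f,g)^(s) with acute Y = D_{acute X}, grave Y = D_{grave X};
wtf, wtg are the weights of f and g.\<close>
definition ext_transvectant ::
  "real^'n^'n \<Rightarrow> real^'m^'m \<Rightarrow> nat \<Rightarrow> nat \<Rightarrow> nat \<Rightarrow> 'n::finite ps \<Rightarrow> 'm::finite ps \<Rightarrow> ('n, 'm) ps2" where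
  "ext_transvectant Xa Xg wtf wtg s f g = (\<lambda>\<alpha> \<beta>.
     \<Sum>j\<le>s. (-1) ^ j * real (s choose j)
        * (fact (wtf - j) / fact (wtf - s)) * (fact (wtg - s + j) / fact (wtg - s))
        * (((ps_D Xa) ^^ j) f \<alpha>) * (((ps_D Xg) ^^ (s - j)) g \<beta>))"

end

theory Submission imports Defs begin

definition E :: "'n::finite \<Rightarrow> 'n \<Rightarrow> 'n ps \<Rightarrow> 'n ps" where
 "E i j f = (\<lambda>\<alpha>. if \<alpha> j = 0 then 0 else (let \<beta> = \<alpha>(j := \<alpha> j - 1) in real (\<beta> i + 1) * f (\<beta>(i := \<beta> i + 1))))"

abbreviation ind :: "bool \<Rightarrow> int" where "ind b \<equiv> of_bool b"

definition sh1 :: "'n \<Rightarrow> 'n \<Rightarrow> ('n \<Rightarrow> nat) \<Rightarrow> ('n \<Rightarrow> nat)" where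
 "sh1 k j \<alpha> = (\<lambda>t. nat (int (\<alpha> t) + ind (t=k) - ind (t=j)))"
definition sh2 :: "'n \<Rightarrow> 'n \<Rightarrow> 'n \<Rightarrow> 'n \<Rightarrow> ('n \<Rightarrow> nat) \<Rightarrow> ('n \<Rightarrow> nat)" where
 "sh2 i j k l \<alpha> = (\<lambda>t. nat (int (\<alpha> t) + ind (t=i) + ind (t=k) - ind (t=j) - ind (t=l)))"

lemma E1: "E k j f \<alpha> = of_int (ind (int (\<alpha> j) \<ge> 1) * (int (\<alpha> k) - ind (k=j) + 1)) * f (sh1 k j \<alpha>)"
proof (cases "\<alpha> j = 0")
  case True then show ?thesis by (simp add: E_def)
next
  case False
  have "\<alpha>(j := \<alpha> j - 1, k := (\<alpha>(j := \<alpha> j - 1)) k + 1) = sh1 k j \<alpha>"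
    using False by (auto simp: sh1_def fun_eq_iff)
  then show ?thesis using False by (auto simp: E_def Let_def)
qed

lemma EE: "E i j (E k l f) \<alpha> = of_int (ind (int (\<alpha> j) \<ge> 1) * ind (int (\<alpha> l) - ind (l=j) + ind (l=i) \<ge> 1)
   * (int (\<alpha> i) - ind (i=j) + 1) * (int (\<alpha> k) - ind (k=j) + ind (k=i) - ind (k=l) + 1)) * f (sh2 i j k l \<alpha>)"
proof (cases "\<alpha> j = 0")
  case True then show ?thesis by (simp add: E_def)
next
  case False
  define \<gamma> where "\<gamma> = \<alpha>(j := \<alpha> j - 1, i := (\<alpha>(j := \<alpha> j - 1)) i + 1)"
  have g: "\<gamma> = sh1 i j \<alpha>" using False by (auto simp: \<gamma>_def sh1_def fun_eq_iff)
  have "E i j (E k l f) \<alpha> = real ((\<alpha>(j := \<alpha> j - 1)) i + 1) * E k l f \<gamma>"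
    using False by (simp add: E_def[of i j] Let_def \<gamma>_def)
  also have "\<dots> = real ((\<alpha>(j := \<alpha> j - 1)) i + 1) * (of_int (ind (int (sh1 i j \<alpha> l) \<ge> 1) * (int (sh1 i j \<alpha> k) - ind (k=l) + 1)) * f (sh1 k l (sh1 i j \<alpha>)))"
    unfolding E1 g ..
  also have "\<dots> = of_int (ind (int (\<alpha> j) \<ge> 1) * ind (int (\<alpha> l) - ind (l=j) + ind (l=i) \<ge> 1)
   * (int (\<alpha> i) - ind (i=j) + 1) * (int (\<alpha> k) - ind (k=j) + ind (k=i) - ind (k=l) + 1)) * f (sh2 i j k l \<alpha>)"
  proof (cases "int (sh1 i j \<alpha> l) \<ge> 1")
    case True
    have "sh1 k l (sh1 i j \<alpha>) = sh2 i j k l \<alpha>"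
      using False True by (auto simp: sh1_def sh2_def fun_eq_iff)
    moreover have "int (sh1 i j \<alpha> l) = int (\<alpha> l) - ind (l=j) + ind (l=i)" "int (sh1 i j \<alpha> k) = int (\<alpha> k) - ind (k=j) + ind (k=i)"
      using False by (auto simp: sh1_def)
    ultimately show ?thesis using False True by (simp add: of_nat_diff)
  next
    case F2: False
    have "int (sh1 i j \<alpha> l) = int (\<alpha> l) - ind (l=j) + ind (l=i)"
      using False by (auto simp: sh1_def)
    then show ?thesis using F2 by simp
  qed
  finally show ?thesis .
qed

lemma scal: fixes i j k l :: 'n and a :: "'n \<Rightarrow> int"
  assumes "\<And>t. a t \<ge> 0"
  shows "(ind (a j \<ge> 1) * ind (a l - ind (l=j) + ind (l=i) \<ge> 1)
   * (a i - ind (i=j) + 1) * (a k - ind (k=j) + ind (k=i) - ind (k=l) + 1))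
  - (ind (a l \<ge> 1) * ind (a j - ind (j=l) + ind (j=k) \<ge> 1)
   * (a k - ind (k=l) + 1) * (a i - ind (i=l) + ind (i=k) - ind (i=j) + 1))
  = ind (i=l) * (ind (a j \<ge> 1) * (a k - ind (k=j) + 1)) - ind (k=j) * (ind (a l \<ge> 1) * (a i - ind (i=l) + 1))"
proof -
  have q1: "\<And>t. (1 \<le> a t) = (a t \<noteq> 0)" "\<And>t. (2 \<le> a t) = (a t \<noteq> 0 \<and> a t \<noteq> 1)"
    using assms by (smt (verit))+
  show ?thesis
  using assms[of i] assms[of j] assms[of k] assms[of l]
  apply (cases "i=j"; cases "i=k"; cases "i=l"; cases "j=k"; cases "j=l"; cases "k=l")
  apply (auto simp: of_bool_def algebra_simps q1)
  done
qed

lemma Ecomm: "E i j (E k l f) \<alpha> - E k l (E i j f) \<alpha> = of_bool (i=l) * E k j f \<alpha> - of_bool (k=j) * E i l f \<alpha>"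
proof -
  have s: "sh2 k l i j \<alpha> = sh2 i j k l \<alpha>" by (auto simp: sh2_def fun_eq_iff)
  have a: "i = l \<Longrightarrow> sh1 k j \<alpha> = sh2 i j k l \<alpha>" by (auto simp: sh1_def sh2_def fun_eq_iff)
  have b: "k = j \<Longrightarrow> sh1 i l \<alpha> = sh2 i j k l \<alpha>" by (auto simp: sh1_def sh2_def fun_eq_iff)
  define a' where "a' = (\<lambda>t. int (\<alpha> t))"
  define c1 where "c1 = (ind (a' j \<ge> 1) * ind (a' l - ind (l=j) + ind (l=i) \<ge> 1)
   * (a' i - ind (i=j) + 1) * (a' k - ind (k=j) + ind (k=i) - ind (k=l) + 1))"
  define c2 where "c2 = (ind (a' l \<ge> 1) * ind (a' j - ind (j=l) + ind (j=k) \<ge> 1)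
   * (a' k - ind (k=l) + 1) * (a' i - ind (i=l) + ind (i=k) - ind (i=j) + 1))"
  define c3 where "c3 = (ind (a' j \<ge> 1) * (a' k - ind (k=j) + 1))"
  define c4 where "c4 = (ind (a' l \<ge> 1) * (a' i - ind (i=l) + 1))"
  have sc: "c1 - c2 = ind (i=l) * c3 - ind (k=j) * c4"
    unfolding c1_def c2_def c3_def c4_def by (rule scal) (simp add: a'_def)
  have 1: "E i j (E k l f) \<alpha> = of_int c1 * f (sh2 i j k l \<alpha>)" unfolding EE c1_def a'_def ..
  have 2: "E k l (E i j f) \<alpha> = of_int c2 * f (sh2 i j k l \<alpha>)" unfolding EE c2_def a'_def s ..
  have 3: "E k j f \<alpha> = of_int c3 * f (sh1 k j \<alpha>)" unfolding E1 c3_def a'_def ..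
  have 4: "E i l f \<alpha> = of_int c4 * f (sh1 i l \<alpha>)" unfolding E1 c4_def a'_def ..
  have "E i j (E k l f) \<alpha> - E k l (E i j f) \<alpha> = of_int (c1 - c2) * f (sh2 i j k l \<alpha>)"
    unfolding 1 2 by (simp add: algebra_simps)
  also have "\<dots> = of_int (ind (i=l) * c3 - ind (k=j) * c4) * f (sh2 i j k l \<alpha>)" unfolding sc ..
  also have "\<dots> = of_bool (i=l) * E k j f \<alpha> - of_bool (k=j) * E i l f \<alpha>"
  proof -
    have e1: "of_bool (i=l) * f (sh1 k j \<alpha>) = of_bool (i=l) * f (sh2 i j k l \<alpha>)"
    proof (cases "i=l")
      case True show ?thesis by (simp only: a[OF True])
    qed simp
    have e2: "of_bool (k=j) * f (sh1 i l \<alpha>) = of_bool (k=j) * f (sh2 i j k l \<alpha>)"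
    proof (cases "k=j")
      case True show ?thesis by (simp only: b[OF True])
    qed simp
    have "of_bool (i=l) * E k j f \<alpha> - of_bool (k=j) * E i l f \<alpha>
       = of_int c3 * (of_bool (i=l) * f (sh1 k j \<alpha>)) - of_int c4 * (of_bool (k=j) * f (sh1 i l \<alpha>))"
      unfolding 3 4 by (simp add: algebra_simps)
    then show ?thesis unfolding e1 e2 by (simp add: algebra_simps)
  qed
  finally show ?thesis .
qed

lemma D_E: "ps_D A f \<alpha> = (\<Sum>i\<in>UNIV. \<Sum>j\<in>UNIV. A$i$j * E i j f \<alpha>)"
  by (simp add: ps_D_def E_def)

lemma E_sum: "E i j (\<lambda>\<gamma>. \<Sum>m\<in>S. h m \<gamma>) \<alpha> = (\<Sum>m\<in>S. E i j (h m) \<alpha>)"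
  by (simp add: E_def Let_def sum_distrib_left)
lemma E_scal: "E i j (\<lambda>\<gamma>. c * h \<gamma>) \<alpha> = c * E i j h \<alpha>"
  by (simp add: E_def Let_def algebra_simps)

lemma D_sum: "ps_D A (\<lambda>\<gamma>. \<Sum>m\<in>S. h m \<gamma>) \<alpha> = (\<Sum>m\<in>S. ps_D A (h m) \<alpha>)"
  unfolding D_E E_sum by (simp add: sum_distrib_left sum.swap[of _ S])
lemma D_scal: "ps_D A (\<lambda>\<gamma>. c * h \<gamma>) \<alpha> = c * ps_D A h \<alpha>"
  unfolding D_E E_scal by (simp add: sum_distrib_left algebra_simps)
lemma E_diff: "E i j (\<lambda>\<gamma>. h1 \<gamma> - h2 \<gamma>) \<alpha> = E i j h1 \<alpha> - E i j h2 \<alpha>"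
  by (simp add: E_def Let_def algebra_simps)
lemma E_add: "E i j (\<lambda>\<gamma>. h1 \<gamma> + h2 \<gamma>) \<alpha> = E i j h1 \<alpha> + E i j h2 \<alpha>"
  by (simp add: E_def Let_def algebra_simps)
lemma D_diff: "ps_D A (\<lambda>\<gamma>. h1 \<gamma> - h2 \<gamma>) \<alpha> = ps_D A h1 \<alpha> - ps_D A h2 \<alpha>"
  unfolding D_E E_diff by (simp add: algebra_simps sum_subtractf)
lemma D_add: "ps_D A (\<lambda>\<gamma>. h1 \<gamma> + h2 \<gamma>) \<alpha> = ps_D A h1 \<alpha> + ps_D A h2 \<alpha>"
  unfolding D_E E_add by (simp add: algebra_simps sum.distrib)

lemma D_mat_diff: "ps_D (A - B) f \<alpha> = ps_D A f \<alpha> - ps_D B f \<alpha>"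
  unfolding D_E by (simp add: algebra_simps sum_subtractf)
lemma D_mat_scal: "ps_D (c *\<^sub>R A) f \<alpha> = c * ps_D A f \<alpha>"
  unfolding D_E by (simp add: algebra_simps sum_distrib_left)
lemma D_mat_neg: "ps_D (- A) f \<alpha> = - ps_D A f \<alpha>"
  unfolding D_E by (simp add: sum_negf)

lemma DD: "ps_D A (ps_D B f) \<alpha> = (\<Sum>i\<in>UNIV. \<Sum>j\<in>UNIV. \<Sum>k\<in>UNIV. \<Sum>l\<in>UNIV. A$i$j * B$k$l * E i j (E k l f) \<alpha>)"
proof -
  have "ps_D B f = (\<lambda>\<gamma>. \<Sum>k\<in>UNIV. \<Sum>l\<in>UNIV. B$k$l * E k l f \<gamma>)" by (simp add: D_E fun_eq_iff)
  then show ?thesis by (simp add: D_E E_sum E_scal sum_distrib_left mult.assoc)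
qed

lemma sum4swap: "(\<Sum>a\<in>A. \<Sum>b\<in>B. \<Sum>c\<in>C. \<Sum>d\<in>D. g a b c d) = (\<Sum>c\<in>C. \<Sum>d\<in>D. \<Sum>a\<in>A. \<Sum>b\<in>B. g a b c d)"
proof -
  have "(\<Sum>a\<in>A. \<Sum>b\<in>B. \<Sum>c\<in>C. \<Sum>d\<in>D. g a b c d) = (\<Sum>a\<in>A. \<Sum>c\<in>C. \<Sum>b\<in>B. \<Sum>d\<in>D. g a b c d)"
    by (rule sum.cong[OF refl], rule sum.swap)
  also have "\<dots> = (\<Sum>c\<in>C. \<Sum>a\<in>A. \<Sum>b\<in>B. \<Sum>d\<in>D. g a b c d)" by (rule sum.swap)
  also have "\<dots> = (\<Sum>c\<in>C. \<Sum>a\<in>A. \<Sum>d\<in>D. \<Sum>b\<in>B. g a b c d)"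
    by (intro sum.cong[OF refl] sum.swap)
  also have "\<dots> = (\<Sum>c\<in>C. \<Sum>d\<in>D. \<Sum>a\<in>A. \<Sum>b\<in>B. g a b c d)"
    by (intro sum.cong[OF refl] sum.swap)
  finally show ?thesis .
qed

lemma delta1: "(\<Sum>l\<in>(UNIV::'a::finite set). g l * (of_bool (i = l) * x)) = g i * (x::real)"
proof -
  have "(\<Sum>l\<in>(UNIV::'a set). g l * (of_bool (i = l) * x)) = (\<Sum>l\<in>UNIV. if l = i then g i * x else 0)"
    by (rule sum.cong) auto
  then show ?thesis by simp
qed
lemma delta2: "(\<Sum>l\<in>(UNIV::'a::finite set). g l * (of_bool (l = i) * x)) = g i * (x::real)"
  using delta1[of g i x] by (simp add: eq_commute)

lemma Dcomm: "ps_D A (ps_D B f) \<alpha> - ps_D B (ps_D A f) \<alpha> = ps_D (B ** A - A ** B) f \<alpha>"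
proof -
  have "ps_D A (ps_D B f) \<alpha> - ps_D B (ps_D A f) \<alpha> =
    (\<Sum>i\<in>UNIV. \<Sum>j\<in>UNIV. \<Sum>k\<in>UNIV. \<Sum>l\<in>UNIV. A$i$j * B$k$l * (E i j (E k l f) \<alpha> - E k l (E i j f) \<alpha>))"
    unfolding DD[of A] DD[of B] sum4swap[where g = "\<lambda>a b c d. B$a$b * A$c$d * E a b (E c d f) \<alpha>"]
    by (simp add: sum_subtractf algebra_simps)
  also have "\<dots> = (\<Sum>i\<in>UNIV. \<Sum>j\<in>UNIV. \<Sum>k\<in>UNIV. \<Sum>l\<in>UNIV. A$i$j * B$k$l * (of_bool (i=l) * E k j f \<alpha>))
     - (\<Sum>i\<in>UNIV. \<Sum>j\<in>UNIV. \<Sum>k\<in>UNIV. \<Sum>l\<in>UNIV. A$i$j * B$k$l * (of_bool (k=j) * E i l f \<alpha>))"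
    unfolding Ecomm by (simp add: sum_subtractf algebra_simps)
  also have "(\<Sum>i\<in>UNIV. \<Sum>j\<in>UNIV. \<Sum>k\<in>UNIV. \<Sum>l\<in>UNIV. A$i$j * B$k$l * (of_bool (i=l) * E k j f \<alpha>))
     = (\<Sum>i\<in>UNIV. \<Sum>j\<in>UNIV. \<Sum>k\<in>UNIV. A$i$j * B$k$i * E k j f \<alpha>)"
    by (simp add: delta1)
  also have "\<dots> = (\<Sum>k\<in>UNIV. \<Sum>j\<in>UNIV. \<Sum>i\<in>UNIV. A$i$j * B$k$i * E k j f \<alpha>)"
  proof -
    have "(\<Sum>i\<in>UNIV. \<Sum>j\<in>UNIV. \<Sum>k\<in>UNIV. A$i$j * B$k$i * E k j f \<alpha>) = (\<Sum>j\<in>UNIV. \<Sum>i\<in>UNIV. \<Sum>k\<in>UNIV. A$i$j * B$k$i * E k j f \<alpha>)"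
      by (rule sum.swap)
    also have "\<dots> = (\<Sum>j\<in>UNIV. \<Sum>k\<in>UNIV. \<Sum>i\<in>UNIV. A$i$j * B$k$i * E k j f \<alpha>)"
      by (intro sum.cong[OF refl] sum.swap)
    also have "\<dots> = (\<Sum>k\<in>UNIV. \<Sum>j\<in>UNIV. \<Sum>i\<in>UNIV. A$i$j * B$k$i * E k j f \<alpha>)"
      by (rule sum.swap)
    finally show ?thesis .
  qed
  also have "\<dots> = ps_D (B ** A) f \<alpha>"
    unfolding D_E by (simp add: matrix_matrix_mult_def sum_distrib_right sum_distrib_left mult_ac)
  also have "(\<Sum>i\<in>UNIV. \<Sum>j\<in>UNIV. \<Sum>k\<in>UNIV. \<Sum>l\<in>UNIV. A$i$j * B$k$l * (of_bool (k=j) * E i l f \<alpha>))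
     = (\<Sum>i\<in>UNIV. \<Sum>j\<in>UNIV. \<Sum>l\<in>UNIV. \<Sum>k\<in>UNIV. A$i$j * B$k$l * (of_bool (k=j) * E i l f \<alpha>))"
    by (intro sum.cong[OF refl] sum.swap)
  also have "\<dots> = (\<Sum>i\<in>UNIV. \<Sum>j\<in>UNIV. \<Sum>l\<in>UNIV. A$i$j * B$j$l * E i l f \<alpha>)"
    by (simp add: delta2)
  also have "\<dots> = (\<Sum>i\<in>UNIV. \<Sum>l\<in>UNIV. \<Sum>j\<in>UNIV. A$i$j * B$j$l * E i l f \<alpha>)"
    by (intro sum.cong[OF refl] sum.swap)
  also have "\<dots> = ps_D (A ** B) f \<alpha>"
    unfolding D_E by (simp add: matrix_matrix_mult_def sum_distrib_right sum_distrib_left mult_ac)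
  finally show ?thesis by (simp add: D_mat_diff)
qed

lemma sl2_Z:
  assumes "sl2_triad X Y Z" "ps_D Z f = (\<lambda>\<alpha>. w * f \<alpha>)"
  shows "ps_D Z ((ps_D X ^^ j) f) = (\<lambda>\<alpha>. (w - 2 * real j) * (ps_D X ^^ j) f \<alpha>)"
proof (induction j)
  case 0 then show ?case using assms by simp
next
  case (Suc j)
  have c: "X ** Z - Z ** X = - (2 *\<^sub>R X)" using assms(1) unfolding sl2_triad_def
    by (metis minus_diff_eq)
  show ?case
  proof
    fix \<alpha>
    let ?h = "(ps_D X ^^ j) f"
    have "ps_D Z (ps_D X ?h) \<alpha> = ps_D X (ps_D Z ?h) \<alpha> + ps_D (X ** Z - Z ** X) ?h \<alpha>"
      using Dcomm[of Z X ?h \<alpha>] by simp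
    also have "\<dots> = (w - 2 * real j) * ps_D X ?h \<alpha> - 2 * ps_D X ?h \<alpha>"
      unfolding Suc c D_scal D_mat_neg D_mat_scal by simp
    finally show "ps_D Z ((ps_D X ^^ Suc j) f) \<alpha> = (w - 2 * real (Suc j)) * (ps_D X ^^ Suc j) f \<alpha>"
      by (simp add: algebra_simps)
  qed
qed

lemma sl2_X:
  assumes "sl2_triad X Y Z" "ps_D Z f = (\<lambda>\<alpha>. w * f \<alpha>)" "ps_D Y f = (\<lambda>_. 0)"
  shows "ps_D Y ((ps_D X ^^ Suc j) f) = (\<lambda>\<alpha>. (real j + 1) * (w - real j) * (ps_D X ^^ j) f \<alpha>)"
proof (induction j)
  case 0
  show ?case
  proof
    fix \<alpha>
    have "ps_D Y (ps_D X f) \<alpha> = ps_D X (ps_D Y f) \<alpha> + ps_D (X ** Y - Y ** X) f \<alpha>"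
      using Dcomm[of Y X f \<alpha>] by simp
    also have "\<dots> = w * f \<alpha>" using assms unfolding sl2_triad_def
      using D_scal[of X 0 f \<alpha>] by simp
    finally show "ps_D Y ((ps_D X ^^ Suc 0) f) \<alpha> = (real 0 + 1) * (w - real 0) * (ps_D X ^^ 0) f \<alpha>" by simp
  qed
next
  case (Suc j)
  show ?case
  proof
    fix \<alpha>
    let ?h = "(ps_D X ^^ Suc j) f"
    have "ps_D Y (ps_D X ?h) \<alpha> = ps_D X (ps_D Y ?h) \<alpha> + ps_D (X ** Y - Y ** X) ?h \<alpha>"
      using Dcomm[of Y X ?h \<alpha>] by simp
    also have "\<dots> = (real j + 1) * (w - real j) * ps_D X ((ps_D X ^^ j) f) \<alpha> + (w - 2 * real (Suc j)) * ?h \<alpha>"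
      unfolding Suc D_scal using assms(1) sl2_Z[OF assms(1,2), of "Suc j"] unfolding sl2_triad_def by simp
    finally show "ps_D Y ((ps_D X ^^ Suc (Suc j)) f) \<alpha> = (real (Suc j) + 1) * (w - real (Suc j)) * (ps_D X ^^ Suc j) f \<alpha>"
      by (simp add: algebra_simps)
  qed
qed

definition Pf :: "real \<Rightarrow> nat \<Rightarrow> nat \<Rightarrow> real" where
  "Pf w k j = (\<Prod>i<k. (real j - real i) * (w - real j + real i + 1))"

lemma Pf_zero: "j < k \<Longrightarrow> Pf w k j = 0"
  unfolding Pf_def by (rule prod_zero) auto

lemma sl2_pow:
  assumes "sl2_triad X Y Z" "ps_D Z f = (\<lambda>\<alpha>. w * f \<alpha>)" "ps_D Y f = (\<lambda>_. 0)"
  shows "(ps_D Y ^^ k) ((ps_D X ^^ j) f) = (\<lambda>\<alpha>. Pf w k j * (ps_D X ^^ (j - k)) f \<alpha>)"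
proof (induction k)
  case 0 then show ?case by (simp add: Pf_def)
next
  case (Suc k)
  show ?case
  proof
    fix \<alpha>
    have "(ps_D Y ^^ Suc k) ((ps_D X ^^ j) f) \<alpha> = Pf w k j * ps_D Y ((ps_D X ^^ (j - k)) f) \<alpha>"
      by (simp add: Suc D_scal)
    also have "\<dots> = Pf w (Suc k) j * (ps_D X ^^ (j - Suc k)) f \<alpha>"
    proof (cases "k < j")
      case True
      then obtain m where m: "j - k = Suc m" "j - Suc k = m" by (metis Suc_diff_Suc)
      have r: "real m + 1 = real j - real k" "w - real m = w - real j + real k + 1" using True m by linarith+
      have p: "Pf w (Suc k) j = Pf w k j * ((real j - real k) * (w - real j + real k + 1))"
        by (simp add: Pf_def)
      show ?thesis unfolding m sl2_X[OF assms] p r by (simp add: algebra_simps)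
    next
      case False
      then have "j - k = 0" by simp
      then show ?thesis using assms(3) False by (simp add: Pf_zero)
    qed
    finally show "(ps_D Y ^^ Suc k) ((ps_D X ^^ j) f) \<alpha> = Pf w (Suc k) j * (ps_D X ^^ (j - Suc k)) f \<alpha>" .
  qed
qed

lemma on_x_pow: "(on_x T ^^ k) F = (\<lambda>\<alpha> \<beta>. (T ^^ k) (\<lambda>\<gamma>. F \<gamma> \<beta>) \<alpha>)"
  by (induction k) (simp_all add: on_x_def)

lemma D_pow_sum: "(ps_D A ^^ k) (\<lambda>\<gamma>. \<Sum>j\<in>S. d j * h j \<gamma>) = (\<lambda>\<alpha>. \<Sum>j\<in>S. d j * (ps_D A ^^ k) (h j) \<alpha>)"
  by (induction k) (simp_all add: D_sum D_scal)

theorem lemma7p3: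
  fixes Xa Ya Za :: "real^'n::finite^'n" and Xg Yg Zg :: "real^'m::finite^'m"
    and f :: "'n ps" and g :: "'m ps" and wtf wtg s :: nat
  assumes "sl2_triad Xa Ya Za" and "sl2_triad Xg Yg Zg"
    and "ps_D Ya f = (\<lambda>_. 0)" and "ps_D Za f = (\<lambda>\<alpha>. real wtf * f \<alpha>)"
    and "ps_D Yg g = (\<lambda>_. 0)" and "ps_D Zg g = (\<lambda>\<beta>. real wtg * g \<beta>)"
    and "s \<le> wtf" and "s \<le> wtg"
  shows "\<exists>c::real. c \<noteq> 0 \<and>
      (on_x (ps_D Ya) ^^ s) (ext_transvectant Xa Xg wtf wtg s f g) = (\<lambda>\<alpha> \<beta>. c * ext_prod f g \<alpha> \<beta>) \<and>
      (\<forall>k>s. (on_x (ps_D Ya) ^^ k) (ext_transvectant Xa Xg wtf wtg s f g) = (\<lambda>\<alpha> \<beta>. 0))"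
proof -
  define w where "w = real wtf"
  define d where "d j \<beta> = (-1) ^ j * real (s choose j)
        * (fact (wtf - j) / fact (wtf - s)) * (fact (wtg - s + j) / fact (wtg - s))
        * (((ps_D Xg) ^^ (s - j)) g \<beta>)" for j \<beta>
  have key: "(on_x (ps_D Ya) ^^ k) (ext_transvectant Xa Xg wtf wtg s f g)
     = (\<lambda>\<alpha> \<beta>. \<Sum>j\<in>{..s}. d j \<beta> * (Pf w k j * (ps_D Xa ^^ (j - k)) f \<alpha>))" for k
  proof -
    have e: "(\<lambda>\<gamma>. ext_transvectant Xa Xg wtf wtg s f g \<gamma> \<beta>) = (\<lambda>\<gamma>. \<Sum>j\<in>{..s}. d j \<beta> * (ps_D Xa ^^ j) f \<gamma>)" for \<beta>
      unfolding ext_transvectant_def d_def by (intro ext sum.cong refl) (simp add: mult_ac)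
    show ?thesis unfolding on_x_pow e D_pow_sum sl2_pow[OF assms(1) assms(4)[folded w_def] assms(3)] ..
  qed
  define c where "c = (-1) ^ s * (fact wtg / fact (wtg - s)) * Pf w s s"
  have Pnz: "Pf w s s \<noteq> 0"
    unfolding Pf_def w_def using assms(7) by (subst prod_zero_iff) auto
  have cnz: "c \<noteq> 0" unfolding c_def using Pnz by simp
  have A: "(on_x (ps_D Ya) ^^ s) (ext_transvectant Xa Xg wtf wtg s f g) = (\<lambda>\<alpha> \<beta>. c * ext_prod f g \<alpha> \<beta>)"
  proof (intro ext)
    fix \<alpha> \<beta>
    have "(\<Sum>j\<in>{..s}. d j \<beta> * (Pf w s j * (ps_D Xa ^^ (j - s)) f \<alpha>)) = d s \<beta> * (Pf w s s * (ps_D Xa ^^ (s - s)) f \<alpha>)"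
      by (subst sum.remove[of _ s]) (auto intro!: sum.neutral simp: Pf_zero)
    also have "\<dots> = c * ext_prod f g \<alpha> \<beta>"
      unfolding d_def c_def ext_prod_def using assms(8) by simp
    finally show "(on_x (ps_D Ya) ^^ s) (ext_transvectant Xa Xg wtf wtg s f g) \<alpha> \<beta> = c * ext_prod f g \<alpha> \<beta>"
      unfolding key .
  qed
  have B: "\<forall>k>s. (on_x (ps_D Ya) ^^ k) (ext_transvectant Xa Xg wtf wtg s f g) = (\<lambda>\<alpha> \<beta>. 0)"
    unfolding key by (auto intro!: ext sum.neutral simp: Pf_zero)
  show ?thesis using A B cnz by blast
qed

end
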